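(* Let $G$ be a topological group, $m\in\mathbb N\cup\{\infty\}$, $\rho\colon G\to\mathrm{Isom}(\mathbf H^m_{\mathbb C})_o$ a representation, and $x\in\mathbf H^m_{\mathbb C}$ a point with total orbit. Let $\alpha(g_1,g_2,g_3)=\mathrm{Cart}(\rho(g_1)x,\rho(g_2)x,\rho(g_3)x)$. If there exists an alternating $G$-invariant $1$-cochain $\omega\colon G^2\to\mathbb R$ with $\partial\omega=\alpha$, then $\rho$ admits a lift to a homomorphism $\tilde\rho\colon G\to U(1,m)$ (i.e. $\tilde\rho(g)$ induces $\rho(g)$ for every $g$).
   Context: $\mathbf H^m_{\mathbb C}$ is the projectivization of the positive vectors of a separable complex Hilbert space with a strongly non-degenerate Hermitian form $B$ of signature $(1,m)$ (linear in the first variable), with $\cosh d([v],[w])=|B(v,w)|/\sqrt{B(v,v)B(w,w)}$; $U(1,m)$ is the group of $B$-unitary maps, and $\mathrm{Isom}(\mathbf H^m_{\mathbb C})_o=PU(1,m)$. A representation is an orbitally continuous homomorphism. A subset of $\mathbf H^m_{\mathbb C}$ is total if no proper closed complex subspace contains lifts of all its points. The Cartan argument is $\mathrm{Cart}(x,y,z)=\arg\big(B(\tilde x,\tilde y)B(\tilde y,\tilde z)B(\tilde z,\tilde x)\big)\in(-\pi/2,\pi/2)$ for any lifts. A $1$-cochain $\omega$ is alternating if $\omega(l,g)=-\omega(g,l)$ and $G$-invariant if $\omega(hg,hl)=\omega(g,l)$; $\partial\omega(g,l,k)=\omega(l,k)-\omega(g,k)+\omega(g,l)$. *)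

theory Defs
  imports "HOL-Analysis.Analysis" "HOL-Library.Extended_Nat" "HOL-Algebra.Group"
begin

text \<open>Standard model of a separable complex Hilbert space with a Hermitian form of
signature (1,m), m in nat or infinity: square-summable sequences indexed by
0..m (all of nat if m = infinity), with
B(v,w) = v_0 conj(w_0) - sum_{i>=1} v_i conj(w_i).\<close>

type_synonym cvec = "nat \<Rightarrow> complex"

definition Vsp :: "enat \<Rightarrow> cvec set" where
  "Vsp m = {v. (\<forall>i. m < enat i \<longrightarrow> v i = 0) \<and> summable (\<lambda>i. (cmod (v i))\<^sup>2)}"

definition Bform :: "cvec \<Rightarrow> cvec \<Rightarrow> complex" where
  "Bform v w = v 0 * cnj (w 0) - (\<Sum>i. v (Suc i) * cnj (w (Suc i)))"

text \<open>The point of the projectivization determined by v: the complex line through v minus 0.\<close>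
definition cline :: "cvec \<Rightarrow> cvec set" where
  "cline v = {(\<lambda>i. c * v i) | c. c \<noteq> 0}"

definition HypSp :: "enat \<Rightarrow> cvec set set" where
  "HypSp m = {cline v | v. v \<in> Vsp m \<and> Re (Bform v v) > 0}"

definition lift :: "cvec set \<Rightarrow> cvec" where
  "lift p = (SOME v. v \<in> p)"

definition hdist :: "cvec set \<Rightarrow> cvec set \<Rightarrow> real" where
  "hdist p q = arcosh (cmod (Bform (lift p) (lift q)) /
      sqrt (Re (Bform (lift p) (lift p)) * Re (Bform (lift q) (lift q))))"

definition Cart :: "cvec set \<Rightarrow> cvec set \<Rightarrow> cvec set \<Rightarrow> real" where
  "Cart x y z = Arg (Bform (lift x) (lift y) * Bform (lift y) (lift z) * Bform (lift z) (lift x))"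

definition Bunitary :: "enat \<Rightarrow> (cvec \<Rightarrow> cvec) \<Rightarrow> bool" where
  "Bunitary m T \<longleftrightarrow> bij_betw T (Vsp m) (Vsp m)
     \<and> (\<forall>v\<in>Vsp m. \<forall>w\<in>Vsp m. \<forall>a b. T (\<lambda>i. a * v i + b * w i) = (\<lambda>i. a * T v i + b * T w i))
     \<and> (\<forall>v\<in>Vsp m. \<forall>w\<in>Vsp m. Bform (T v) (T w) = Bform v w)"

definition induced :: "(cvec \<Rightarrow> cvec) \<Rightarrow> cvec set \<Rightarrow> cvec set" where
  "induced T p = T ` p"

text \<open>PU(1,m) = Isom(H)_o: maps of H induced by B-unitary maps.\<close>
definition PU :: "enat \<Rightarrow> (cvec set \<Rightarrow> cvec set) \<Rightarrow> bool" where
  "PU m f \<longleftrightarrow> (\<exists>T. Bunitary m T \<and> (\<forall>p\<in>HypSp m. f p = induced T p))"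

definition closed_csubspace :: "enat \<Rightarrow> cvec set \<Rightarrow> bool" where
  "closed_csubspace m W \<longleftrightarrow> W \<subseteq> Vsp m \<and> (\<lambda>i. 0) \<in> W
     \<and> (\<forall>v\<in>W. \<forall>w\<in>W. \<forall>a b. (\<lambda>i. a * v i + b * w i) \<in> W)
     \<and> (\<forall>x v. (\<forall>n. x n \<in> W) \<longrightarrow> v \<in> Vsp m
          \<longrightarrow> (\<lambda>n. \<Sum>i. (cmod (x n i - v i))\<^sup>2) \<longlonglongrightarrow> 0 \<longrightarrow> v \<in> W)"

definition total :: "enat \<Rightarrow> cvec set set \<Rightarrow> bool" where
  "total m S \<longleftrightarrow> (\<forall>W. closed_csubspace m W \<and> (\<forall>p\<in>S. \<exists>v\<in>p. v \<in> W) \<longrightarrow> W = Vsp m)"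

definition topological_group :: "('g, 'b) monoid_scheme \<Rightarrow> 'g topology \<Rightarrow> bool" where
  "topological_group G T \<longleftrightarrow> group G \<and> topspace T = carrier G
     \<and> continuous_map (prod_topology T T) T (\<lambda>(x, y). x \<otimes>\<^bsub>G\<^esub> y)
     \<and> continuous_map T T (\<lambda>x. inv\<^bsub>G\<^esub> x)"

definition representation ::
  "('g, 'b) monoid_scheme \<Rightarrow> 'g topology \<Rightarrow> enat \<Rightarrow> ('g \<Rightarrow> cvec set \<Rightarrow> cvec set) \<Rightarrow> bool" where
  "representation G T m \<rho> \<longleftrightarrow>
     (\<forall>g\<in>carrier G. PU m (\<rho> g))
   \<and> (\<forall>g\<in>carrier G. \<forall>h\<in>carrier G. \<forall>p\<in>HypSp m. \<rho> (g \<otimes>\<^bsub>G\<^esub> h) p = \<rho> g (\<rho> h p))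
   \<and> (\<forall>p\<in>HypSp m. \<forall>g\<in>carrier G. \<forall>\<epsilon>>0. \<exists>U. openin T U \<and> g \<in> U
        \<and> (\<forall>h\<in>U. hdist (\<rho> h p) (\<rho> g p) < \<epsilon>))"

end

theory Submission
  imports Defs
begin

definition Pos :: "enat \<Rightarrow> cvec set" where
  "Pos m = {v\<in>Vsp m. Re (Bform v v) > 0}"

lemma Vsp_summ: "v \<in> Vsp m \<Longrightarrow> summable (\<lambda>i. (cmod (v i))\<^sup>2)"
  by (simp add: Vsp_def)

lemma Vsp_summ_Suc: "v \<in> Vsp m \<Longrightarrow> summable (\<lambda>i. (cmod (v (Suc i)))\<^sup>2)"
  using Vsp_summ summable_Suc_iff[of "\<lambda>i. (cmod (v i))\<^sup>2"] by blast

lemma Vsp_lin: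
  assumes "v \<in> Vsp m" "w \<in> Vsp m"
  shows "(\<lambda>i. a * v i + b * w i) \<in> Vsp m"
proof -
  have sq2: "(p + q)\<^sup>2 \<le> 2 * p\<^sup>2 + 2 * q\<^sup>2" for p q :: real
  proof -
    have "0 \<le> (p - q)\<^sup>2" by simp
    thus ?thesis by (simp add: power2_eq_square algebra_simps)
  qed
  have b: "(cmod (a * v i + b * w i))\<^sup>2 \<le> 2 * (cmod a)\<^sup>2 * (cmod (v i))\<^sup>2 + 2 * (cmod b)\<^sup>2 * (cmod (w i))\<^sup>2" for i
  proof -
    have "cmod (a * v i + b * w i) \<le> cmod a * cmod (v i) + cmod b * cmod (w i)"
      by (metis norm_mult norm_triangle_ineq)
    hence "(cmod (a * v i + b * w i))\<^sup>2 \<le> (cmod a * cmod (v i) + cmod b * cmod (w i))\<^sup>2"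
      by (simp add: power_mono)
    also have "\<dots> \<le> 2 * (cmod a)\<^sup>2 * (cmod (v i))\<^sup>2 + 2 * (cmod b)\<^sup>2 * (cmod (w i))\<^sup>2"
      using sq2[of "cmod a * cmod (v i)" "cmod b * cmod (w i)"] by (simp add: power_mult_distrib)
    finally show ?thesis .
  qed
  have "summable (\<lambda>i. 2 * (cmod a)\<^sup>2 * (cmod (v i))\<^sup>2 + 2 * (cmod b)\<^sup>2 * (cmod (w i))\<^sup>2)"
    using Vsp_summ[OF assms(1)] Vsp_summ[OF assms(2)]
    by (intro summable_add summable_mult) auto
  hence "summable (\<lambda>i. (cmod (a * v i + b * w i))\<^sup>2)"
    by (rule summable_comparison_test'[where N=0]) (use b in auto)
  thus ?thesis using assms by (auto simp: Vsp_def)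
qed


lemma amgm: fixes x y t :: real assumes "t > 0"
  shows "2 * (x * y) \<le> t * x\<^sup>2 + y\<^sup>2 / t"
proof -
  have h: "t * x\<^sup>2 + y\<^sup>2 / t - 2 * (x * y) = (t * x - y)\<^sup>2 / t"
    using assms by (simp add: field_simps power2_eq_square)
  have "0 \<le> (t * x - y)\<^sup>2 / t" using assms by simp
  hence "0 \<le> t * x\<^sup>2 + y\<^sup>2 / t - 2 * (x * y)" using h by simp
  thus ?thesis by simp
qed

lemma amgm1: fixes x y :: real shows "2 * (x * y) \<le> x\<^sup>2 + y\<^sup>2"
proof -
  have "0 \<le> (x - y)\<^sup>2" by simp
  thus ?thesis by (simp add: power2_eq_square algebra_simps)
qed

lemma prod_norm_summ:
  assumes "v \<in> Vsp m" "w \<in> Vsp m"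
  shows "summable (\<lambda>i. norm (v (Suc i) * cnj (w (Suc i))))"
proof -
  have s: "summable (\<lambda>i. (cmod (v (Suc i)))\<^sup>2 + (cmod (w (Suc i)))\<^sup>2)"
    by (rule summable_add[OF Vsp_summ_Suc[OF assms(1)] Vsp_summ_Suc[OF assms(2)]])
  show ?thesis
  proof (rule summable_comparison_test'[OF s, where N=0])
    fix n :: nat
    have "2 * (cmod (v (Suc n)) * cmod (w (Suc n))) \<le> (cmod (v (Suc n)))\<^sup>2 + (cmod (w (Suc n)))\<^sup>2"
      by (rule amgm1)
    moreover have "0 \<le> cmod (v (Suc n)) * cmod (w (Suc n))" by simp
    ultimately have "cmod (v (Suc n)) * cmod (w (Suc n)) \<le> (cmod (v (Suc n)))\<^sup>2 + (cmod (w (Suc n)))\<^sup>2"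
      by linarith
    moreover have "norm (norm (v (Suc n) * cnj (w (Suc n)))) = cmod (v (Suc n)) * cmod (w (Suc n))"
      by (simp only: norm_mult complex_mod_cnj real_norm_def abs_mult abs_norm_cancel)
    ultimately show "norm (norm (v (Suc n) * cnj (w (Suc n)))) \<le> (cmod (v (Suc n)))\<^sup>2 + (cmod (w (Suc n)))\<^sup>2"
      by simp
  qed
qed

lemma prod_summ:
  assumes "v \<in> Vsp m" "w \<in> Vsp m"
  shows "summable (\<lambda>i. v (Suc i) * cnj (w (Suc i)))"
  by (rule summable_norm_cancel[OF prod_norm_summ[OF assms]])

lemma Bform_scale:
  assumes "v \<in> Vsp m" "w \<in> Vsp m"
  shows "Bform (\<lambda>i. a * v i) (\<lambda>i. b * w i) = a * cnj b * Bform v w"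
proof -
  have "(\<Sum>i. a * v (Suc i) * cnj (b * w (Suc i))) = (\<Sum>i. (a * cnj b) * (v (Suc i) * cnj (w (Suc i))))"
    by (simp add: algebra_simps)
  also have "\<dots> = a * cnj b * (\<Sum>i. v (Suc i) * cnj (w (Suc i)))"
    by (rule suminf_mult[OF prod_summ[OF assms]])
  finally show ?thesis unfolding Bform_def by (simp add: algebra_simps)
qed

lemma Bform_lin:
  assumes "v \<in> Vsp m" "w \<in> Vsp m" "z \<in> Vsp m"
  shows "Bform (\<lambda>i. a * v i + b * w i) z = a * Bform v z + b * Bform w z"
proof -
  have "(\<Sum>i. (a * v (Suc i) + b * w (Suc i)) * cnj (z (Suc i)))
     = (\<Sum>i. a * (v (Suc i) * cnj (z (Suc i))) + b * (w (Suc i) * cnj (z (Suc i))))"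
    by (simp add: algebra_simps)
  also have "\<dots> = (\<Sum>i. a * (v (Suc i) * cnj (z (Suc i)))) + (\<Sum>i. b * (w (Suc i) * cnj (z (Suc i))))"
    using prod_summ[OF assms(1,3)] prod_summ[OF assms(2,3)]
    by (intro suminf_add[symmetric] summable_mult)
  also have "\<dots> = a * (\<Sum>i. v (Suc i) * cnj (z (Suc i))) + b * (\<Sum>i. w (Suc i) * cnj (z (Suc i)))"
    using prod_summ[OF assms(1,3)] prod_summ[OF assms(2,3)] by (simp add: suminf_mult)
  finally show ?thesis unfolding Bform_def by (simp add: algebra_simps)
qed

lemma Bform_cnj:
  assumes "v \<in> Vsp m" "w \<in> Vsp m"
  shows "Bform w v = cnj (Bform v w)"
proof -
  have "(\<lambda>i. cnj (v (Suc i) * cnj (w (Suc i)))) sums cnj (\<Sum>i. v (Suc i) * cnj (w (Suc i)))"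
    by (rule iffD2[OF sums_cnj summable_sums[OF prod_summ[OF assms]]])
  moreover have "(\<lambda>i. cnj (v (Suc i) * cnj (w (Suc i)))) = (\<lambda>i. w (Suc i) * cnj (v (Suc i)))"
    by (simp add: mult.commute)
  ultimately have "(\<Sum>i. w (Suc i) * cnj (v (Suc i))) = cnj (\<Sum>i. v (Suc i) * cnj (w (Suc i)))"
    using sums_unique by metis
  thus ?thesis unfolding Bform_def by (simp add: mult.commute)
qed

definition NS :: "cvec \<Rightarrow> real" where "NS v = (\<Sum>i. (cmod (v (Suc i)))\<^sup>2)"

lemma NS_nonneg: "v \<in> Vsp m \<Longrightarrow> NS v \<ge> 0"
  unfolding NS_def using Vsp_summ_Suc by (intro suminf_nonneg) auto

lemma Bform_self:
  assumes "v \<in> Vsp m"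
  shows "Bform v v = complex_of_real ((cmod (v 0))\<^sup>2 - NS v)"
proof -
  have "(\<Sum>i. v (Suc i) * cnj (v (Suc i))) = (\<Sum>i. complex_of_real ((cmod (v (Suc i)))\<^sup>2))"
    using complex_norm_square by (metis of_real_power)
  also have "\<dots> = complex_of_real (NS v)"
    unfolding NS_def by (rule suminf_of_real[OF Vsp_summ_Suc[OF assms], symmetric])
  finally show ?thesis unfolding Bform_def using complex_norm_square[of "v 0"] by simp
qed

lemma Pos_pair_nonzero:
  assumes "v \<in> Pos m" "w \<in> Pos m"
  shows "Bform v w \<noteq> 0"
proof -
  have vV: "v \<in> Vsp m" and wV: "w \<in> Vsp m" using assms by (auto simp: Pos_def)
  define a where "a = cmod (v 0)"
  define b where "b = cmod (w 0)"
  have ha: "a\<^sup>2 > NS v" using assms(1) Bform_self[OF vV] by (simp add: Pos_def a_def)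
  have hb: "b\<^sup>2 > NS w" using assms(2) Bform_self[OF wV] by (simp add: Pos_def b_def)
  have a0: "a > 0"
  proof -
    have "a\<^sup>2 > 0" using ha NS_nonneg[OF vV] by linarith
    moreover have "a \<ge> 0" by (simp add: a_def)
    ultimately show ?thesis by (cases "a = 0") auto
  qed
  have b0: "b > 0"
  proof -
    have "b\<^sup>2 > 0" using hb NS_nonneg[OF wV] by linarith
    moreover have "b \<ge> 0" by (simp add: b_def)
    ultimately show ?thesis by (cases "b = 0") auto
  qed
  define t where "t = b / a"
  have t0: "t > 0" using a0 b0 by (simp add: t_def)
  have s1: "summable (\<lambda>i. (cmod (v (Suc i)))\<^sup>2)" "summable (\<lambda>i. (cmod (w (Suc i)))\<^sup>2)"
    using Vsp_summ_Suc vV wV by auto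
  define S where "S = (\<Sum>i. v (Suc i) * cnj (w (Suc i)))"
  have sn: "summable (\<lambda>i. norm (v (Suc i) * cnj (w (Suc i))))" by (rule prod_norm_summ[OF vV wV])
  have sa: "summable (\<lambda>i. t * (cmod (v (Suc i)))\<^sup>2)" by (rule summable_mult[OF s1(1)])
  have sb: "summable (\<lambda>i. (cmod (w (Suc i)))\<^sup>2 / t)" by (rule summable_divide[OF s1(2)])
  have "norm S \<le> (\<Sum>i. norm (v (Suc i) * cnj (w (Suc i))))"
    unfolding S_def by (rule summable_norm[OF sn])
  hence "2 * norm S \<le> 2 * (\<Sum>i. norm (v (Suc i) * cnj (w (Suc i))))" by simp
  also have "\<dots> = (\<Sum>i. 2 * norm (v (Suc i) * cnj (w (Suc i))))"
    by (rule suminf_mult[OF sn, symmetric])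
  also have "\<dots> \<le> (\<Sum>i. t * (cmod (v (Suc i)))\<^sup>2 + (cmod (w (Suc i)))\<^sup>2 / t)"
  proof (rule suminf_le)
    fix n show "2 * norm (v (Suc n) * cnj (w (Suc n))) \<le> t * (cmod (v (Suc n)))\<^sup>2 + (cmod (w (Suc n)))\<^sup>2 / t"
      unfolding norm_mult complex_mod_cnj by (rule amgm[OF t0])
    show "summable (\<lambda>n. 2 * norm (v (Suc n) * cnj (w (Suc n))))" by (rule summable_mult[OF sn])
    show "summable (\<lambda>n. t * (cmod (v (Suc n)))\<^sup>2 + (cmod (w (Suc n)))\<^sup>2 / t)"
      by (rule summable_add[OF sa sb])
  qed
  also have "\<dots> = t * NS v + NS w / t"
  proof -
    have e1: "(\<Sum>i. t * (cmod (v (Suc i)))\<^sup>2) = t * NS v"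
      unfolding NS_def by (rule suminf_mult[OF s1(1)])
    have e2: "(\<Sum>i. (cmod (w (Suc i)))\<^sup>2 / t) = NS w / t"
      unfolding NS_def by (rule suminf_divide[OF s1(2)])
    show ?thesis using suminf_add[OF sa sb] e1 e2 by simp
  qed
  also have "\<dots> < t * a\<^sup>2 + b\<^sup>2 / t"
  proof -
    have "t * NS v < t * a\<^sup>2" using ha t0 by simp
    moreover have "NS w / t < b\<^sup>2 / t" using hb t0 by (simp add: divide_strict_right_mono)
    ultimately show ?thesis by (rule add_strict_mono)
  qed
  also have "\<dots> = 2 * (a * b)"
  proof -
    have "t * a\<^sup>2 = a * b" using a0 by (simp add: t_def power2_eq_square)
    moreover have "b\<^sup>2 / t = a * b" using a0 b0 by (simp add: t_def power2_eq_square)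
    ultimately show ?thesis by simp
  qed
  finally have lt: "norm S < a * b" by simp
  have "cmod (v 0 * cnj (w 0)) = a * b" by (simp add: a_def b_def norm_mult)
  hence "cmod (Bform v w) \<ge> a * b - norm S"
    unfolding Bform_def S_def[symmetric] using norm_triangle_ineq2[of "v 0 * cnj (w 0)" S] by simp
  thus ?thesis using lt by auto
qed

lemma Pos_Vsp: "v \<in> Pos m \<Longrightarrow> v \<in> Vsp m" by (simp add: Pos_def)

lemma Bu_Vsp: "Bunitary m T \<Longrightarrow> v \<in> Vsp m \<Longrightarrow> T v \<in> Vsp m"
  unfolding Bunitary_def using bij_betw_apply by metis

lemma Bu_B: "Bunitary m T \<Longrightarrow> v \<in> Vsp m \<Longrightarrow> w \<in> Vsp m \<Longrightarrow> Bform (T v) (T w) = Bform v w"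
  unfolding Bunitary_def by blast

lemma Bu_lin: "Bunitary m T \<Longrightarrow> v \<in> Vsp m \<Longrightarrow> w \<in> Vsp m \<Longrightarrow>
   T (\<lambda>i. a * v i + b * w i) = (\<lambda>i. a * T v i + b * T w i)"
  unfolding Bunitary_def by blast

lemma Bu_scale: assumes "Bunitary m T" "v \<in> Vsp m"
  shows "T (\<lambda>i. c * v i) = (\<lambda>i. c * T v i)"
  using Bu_lin[OF assms assms(2), of c 0] by simp

lemma Bu_Pos: "Bunitary m T \<Longrightarrow> v \<in> Pos m \<Longrightarrow> T v \<in> Pos m"
  unfolding Pos_def using Bu_Vsp Bu_B by auto

lemma cline_scale: assumes "c \<noteq> 0" shows "cline (\<lambda>i. c * v i) = cline v"
proof
  show "cline (\<lambda>i. c * v i) \<subseteq> cline v"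
  proof
    fix x assume "x \<in> cline (\<lambda>i. c * v i)"
    then obtain d where "d \<noteq> 0" "x = (\<lambda>i. d * (c * v i))" unfolding cline_def by blast
    hence "x = (\<lambda>i. (d * c) * v i)" "d * c \<noteq> 0" using assms by (auto simp: mult.assoc)
    thus "x \<in> cline v" unfolding cline_def by blast
  qed
  show "cline v \<subseteq> cline (\<lambda>i. c * v i)"
  proof
    fix x assume "x \<in> cline v"
    then obtain d where "d \<noteq> 0" "x = (\<lambda>i. d * v i)" unfolding cline_def by blast
    hence "x = (\<lambda>i. (d / c) * (c * v i))" "d / c \<noteq> 0" using assms by auto
    thus "x \<in> cline (\<lambda>i. c * v i)" unfolding cline_def by blast
  qed
qed

lemma Bu_cline: assumes "Bunitary m T" "v \<in> Vsp m"
  shows "T ` cline v = cline (T v)"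
proof -
  have "T ` cline v = (\<lambda>c. T (\<lambda>i. c * v i)) ` {c. c \<noteq> 0}"
    unfolding cline_def by auto
  also have "\<dots> = (\<lambda>c. (\<lambda>i. c * T v i)) ` {c. c \<noteq> 0}"
    using Bu_scale[OF assms] by simp
  also have "\<dots> = cline (T v)" unfolding cline_def by auto
  finally show ?thesis .
qed

lemma HypSp_E: "p \<in> HypSp m \<Longrightarrow> \<exists>v\<in>Pos m. p = cline v"
  unfolding HypSp_def Pos_def by blast

lemma HypSp_I: "v \<in> Pos m \<Longrightarrow> cline v \<in> HypSp m"
  unfolding HypSp_def Pos_def by blast

lemma self_in_cline: "v \<in> cline v"
proof -
  have "v = (\<lambda>i. 1 * v i)" by simp
  thus ?thesis unfolding cline_def by force
qed

lemma lift_cline: "\<exists>a. a \<noteq> 0 \<and> lift (cline v) = (\<lambda>i. a * v i)"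
proof -
  have "lift (cline v) \<in> cline v" unfolding lift_def by (rule someI[of "\<lambda>x. x \<in> cline v", OF self_in_cline])
  thus ?thesis unfolding cline_def by blast
qed

lemma Bu_HypSp: assumes "Bunitary m T" "p \<in> HypSp m" shows "T ` p \<in> HypSp m"
proof -
  obtain v where v: "v \<in> Pos m" "p = cline v" using HypSp_E[OF assms(2)] by blast
  have "T ` p = cline (T v)" using Bu_cline[OF assms(1) Pos_Vsp[OF v(1)]] v(2) by simp
  thus ?thesis using HypSp_I[OF Bu_Pos[OF assms(1) v(1)]] by simp
qed

lemma Bu_comp: assumes "Bunitary m T1" "Bunitary m T2" shows "Bunitary m (\<lambda>v. T1 (T2 v))"
proof -
  have b1: "bij_betw T1 (Vsp m) (Vsp m)" and b2: "bij_betw T2 (Vsp m) (Vsp m)"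
    using assms unfolding Bunitary_def by auto
  have "bij_betw (T1 \<circ> T2) (Vsp m) (Vsp m)" by (rule bij_betw_trans[OF b2 b1])
  hence "bij_betw (\<lambda>v. T1 (T2 v)) (Vsp m) (Vsp m)" by (simp add: comp_def)
  moreover have "\<forall>v\<in>Vsp m. \<forall>w\<in>Vsp m. \<forall>a b. T1 (T2 (\<lambda>i. a * v i + b * w i)) = (\<lambda>i. a * T1 (T2 v) i + b * T1 (T2 w) i)"
    using Bu_lin[OF assms(2)] Bu_lin[OF assms(1)] Bu_Vsp[OF assms(2)] by simp
  moreover have "\<forall>v\<in>Vsp m. \<forall>w\<in>Vsp m. Bform (T1 (T2 v)) (T1 (T2 w)) = Bform v w"
    using Bu_B[OF assms(2)] Bu_B[OF assms(1)] Bu_Vsp[OF assms(2)] by simp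
  ultimately show ?thesis unfolding Bunitary_def by blast
qed

lemma unit_cnj: "cmod z = 1 \<Longrightarrow> z * cnj z = 1"
  using complex_norm_square[of z] by simp

lemma Bu_smul: assumes "Bunitary m T" "cmod z = 1" shows "Bunitary m (\<lambda>v i. z * T v i)"
proof -
  have z0: "z \<noteq> 0" using assms(2) by auto
  have b1: "bij_betw T (Vsp m) (Vsp m)" using assms unfolding Bunitary_def by auto
  have bs: "bij_betw (\<lambda>v i. z * v i) (Vsp m) (Vsp m)"
  proof (rule bij_betwI[where g = "\<lambda>v i. v i / z"])
    show "(\<lambda>v i. z * v i) \<in> Vsp m \<rightarrow> Vsp m"
      using Vsp_lin[of _ m _ z 0] by simp
    show "(\<lambda>v i. v i / z) \<in> Vsp m \<rightarrow> Vsp m"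
      using Vsp_lin[of _ m _ "1/z" 0] by simp
    show "\<And>x. x \<in> Vsp m \<Longrightarrow> (\<lambda>i. z * x i / z) = x" using z0 by simp
    show "\<And>y. y \<in> Vsp m \<Longrightarrow> (\<lambda>i. z * (y i / z)) = y" using z0 by simp
  qed
  have "bij_betw ((\<lambda>v i. z * v i) \<circ> T) (Vsp m) (Vsp m)" by (rule bij_betw_trans[OF b1 bs])
  hence "bij_betw (\<lambda>v i. z * T v i) (Vsp m) (Vsp m)" by (simp add: comp_def)
  moreover have "\<forall>v\<in>Vsp m. \<forall>w\<in>Vsp m. \<forall>a b. (\<lambda>i. z * T (\<lambda>i. a * v i + b * w i) i) = (\<lambda>i. a * (z * T v i) + b * (z * T w i))"
    using Bu_lin[OF assms(1)] by (simp add: algebra_simps)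
  moreover have "\<forall>v\<in>Vsp m. \<forall>w\<in>Vsp m. Bform (\<lambda>i. z * T v i) (\<lambda>i. z * T w i) = Bform v w"
  proof (intro ballI)
    fix v w assume vw: "v \<in> Vsp m" "w \<in> Vsp m"
    have "Bform (\<lambda>i. z * T v i) (\<lambda>i. z * T w i) = z * cnj z * Bform (T v) (T w)"
      by (rule Bform_scale[OF Bu_Vsp[OF assms(1) vw(1)] Bu_Vsp[OF assms(1) vw(2)]])
    thus "Bform (\<lambda>i. z * T v i) (\<lambda>i. z * T w i) = Bform v w"
      using unit_cnj[OF assms(2)] Bu_B[OF assms(1) vw] by simp
  qed
  ultimately show ?thesis unfolding Bunitary_def by blast
qed

lemma Pos_cancel: assumes "v \<in> Pos m" "(\<lambda>i. c * v i) = (\<lambda>i. d * v i)" shows "c = d"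
proof (rule ccontr)
  assume "c \<noteq> d"
  hence "\<forall>i. v i = 0" using assms(2) by (metis mult_cancel_right)
  hence "v = (\<lambda>i. 0)" by auto
  hence "Bform v v = 0" unfolding Bform_def by simp
  thus False using assms(1) by (simp add: Pos_def)
qed

lemma Bform_self_sgn: assumes "v \<in> Pos m" shows "sgn (Bform v v) = 1"
proof -
  define r where "r = (cmod (v 0))\<^sup>2 - NS v"
  have e: "Bform v v = complex_of_real r"
    unfolding r_def by (rule Bform_self[OF Pos_Vsp[OF assms]])
  have "r > 0" using assms e by (simp add: Pos_def)
  hence "sgn r = 1" by simp
  thus ?thesis by (simp only: e sgn_of_real) simp
qed

lemma Bform_lin_right:
  assumes "v \<in> Vsp m" "w \<in> Vsp m" "z \<in> Vsp m"
  shows "Bform z (\<lambda>i. a * v i + b * w i) = cnj a * Bform z v + cnj b * Bform z w"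
proof -
  have "Bform z (\<lambda>i. a * v i + b * w i) = cnj (Bform (\<lambda>i. a * v i + b * w i) z)"
    using Bform_cnj[OF assms(3) Vsp_lin[OF assms(1,2)]] by simp
  also have "\<dots> = cnj (a * Bform v z + b * Bform w z)" using Bform_lin[OF assms] by simp
  also have "\<dots> = cnj a * Bform z v + cnj b * Bform z w"
    using Bform_cnj[OF assms(1,3)] Bform_cnj[OF assms(2,3)] by simp
  finally show ?thesis .
qed

lemma pos_shift:
  assumes w: "w \<in> Vsp m" and u: "u \<in> Pos m"
  shows "\<exists>t::real. (\<lambda>i. 1 * w i + complex_of_real t * u i) \<in> Pos m"
proof -
  have uV: "u \<in> Vsp m" by (rule Pos_Vsp[OF u])
  define A where "A = Re (Bform u u)"
  define Bq where "Bq = Re (Bform w u)"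
  define C where "C = Re (Bform w w)"
  have A0: "A > 0" using u by (simp add: Pos_def A_def)
  define K where "K = \<bar>C\<bar> + 2 * \<bar>Bq\<bar> + 1"
  define t where "t = K / A + 1"
  have K0: "K > 0" unfolding K_def by simp
  have t1: "t \<ge> 1" unfolding t_def using K0 A0 by simp
  have tA: "t * A = K + A" unfolding t_def using A0 by (simp add: field_simps)
  define x where "x = (\<lambda>i. 1 * w i + complex_of_real t * u i)"
  have xV: "x \<in> Vsp m" unfolding x_def by (rule Vsp_lin[OF w uV])
  have "Bform x x = 1 * Bform w x + complex_of_real t * Bform u x"
    unfolding x_def by (rule Bform_lin[OF w uV xV[unfolded x_def]])
  moreover have "Bform w x = cnj 1 * Bform w w + cnj (complex_of_real t) * Bform w u"
    unfolding x_def by (rule Bform_lin_right[OF w uV w])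
  moreover have "Bform u x = cnj 1 * Bform u w + cnj (complex_of_real t) * Bform u u"
    unfolding x_def by (rule Bform_lin_right[OF w uV uV])
  ultimately have e: "Bform x x = Bform w w + complex_of_real t * Bform w u + complex_of_real t * Bform u w
      + complex_of_real t * (complex_of_real t * Bform u u)"
    by (simp add: algebra_simps)
  have ruw: "Re (Bform u w) = Bq" unfolding Bq_def using Bform_cnj[OF w uV] by simp
  have re: "Re (Bform x x) = C + t * Bq + t * Bq + t * (t * A)"
    unfolding e using ruw by (simp add: A_def Bq_def C_def)
  have h1: "t * (t * A) \<ge> t * K" using tA K0 t1 A0 by (simp add: mult_left_mono)
  have h2: "t * \<bar>C\<bar> \<ge> \<bar>C\<bar>" using t1 by (simp add: mult_right_mono[of 1 t "\<bar>C\<bar>", simplified])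
  have h3: "t * Bq \<ge> - (t * \<bar>Bq\<bar>)" using t1 by (simp add: mult_left_mono[of "-\<bar>Bq\<bar>" Bq t, simplified])
  have h4: "t * K = t * \<bar>C\<bar> + 2 * (t * \<bar>Bq\<bar>) + t" unfolding K_def by (simp add: algebra_simps)
  have "C + \<bar>C\<bar> \<ge> 0" by simp
  hence "Re (Bform x x) > 0" unfolding re using h1 h2 h3 h4 t1 by linarith
  thus ?thesis using xV unfolding Pos_def x_def by blast
qed

lemma scalar_lemma:
  assumes T1: "Bunitary m T1" and T2: "Bunitary m T2" and u: "u \<in> Pos m"
    and same: "\<forall>p\<in>HypSp m. T1 ` p = T2 ` p"
  shows "\<exists>l. cmod l = 1 \<and> (\<forall>w\<in>Vsp m. T1 w = (\<lambda>i. l * T2 w i))"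
proof -
  have uV: "u \<in> Vsp m" by (rule Pos_Vsp[OF u])
  have ex: "\<exists>c. c \<noteq> 0 \<and> T1 v = (\<lambda>i. c * T2 v i)" if v: "v \<in> Pos m" for v
  proof -
    have vV: "v \<in> Vsp m" by (rule Pos_Vsp[OF v])
    have "T1 v \<in> T1 ` cline v" using self_in_cline by blast
    also have "\<dots> = T2 ` cline v" using same HypSp_I[OF v] by blast
    also have "\<dots> = cline (T2 v)" by (rule Bu_cline[OF T2 vV])
    finally show ?thesis unfolding cline_def by blast
  qed
  obtain l where l: "l \<noteq> 0" "T1 u = (\<lambda>i. l * T2 u i)" using ex[OF u] by blast
  have key: "l * cnj c = 1" if v: "v \<in> Pos m" and c: "T1 v = (\<lambda>i. c * T2 v i)" for v c
  proof -
    have vV: "v \<in> Vsp m" by (rule Pos_Vsp[OF v])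
    have "Bform u v = Bform (T1 u) (T1 v)" using Bu_B[OF T1 uV vV] by simp
    also have "\<dots> = l * cnj c * Bform (T2 u) (T2 v)"
      unfolding l(2) c by (rule Bform_scale[OF Bu_Vsp[OF T2 uV] Bu_Vsp[OF T2 vV]])
    also have "\<dots> = l * cnj c * Bform u v" using Bu_B[OF T2 uV vV] by simp
    finally have "1 * Bform u v = l * cnj c * Bform u v" by simp
    thus ?thesis using Pos_pair_nonzero[OF u v] by (metis mult_cancel_right)
  qed
  have ll: "l * cnj l = 1" by (rule key[OF u l(2)])
  have onpos: "T1 v = (\<lambda>i. l * T2 v i)" if v: "v \<in> Pos m" for v
  proof -
    obtain c where c: "c \<noteq> 0" "T1 v = (\<lambda>i. c * T2 v i)" using ex[OF v] by blast
    have "l * cnj c = l * cnj l" using key[OF v c(2)] ll by simp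
    hence "cnj c = cnj l" using l(1) by simp
    hence "c = l" by simp
    thus ?thesis using c by simp
  qed
  have cl: "cmod l = 1"
  proof -
    have "complex_of_real ((cmod l)\<^sup>2) = 1" using ll complex_norm_square[of l] by simp
    hence "(cmod l)\<^sup>2 = 1" by (metis of_real_eq_1_iff)
    hence "cmod l = 1 \<or> cmod l = -1" by (simp add: power2_eq_1_iff)
    moreover have "cmod l \<ge> 0" by simp
    ultimately show ?thesis by linarith
  qed
  have "T1 w = (\<lambda>i. l * T2 w i)" if w: "w \<in> Vsp m" for w
  proof -
    obtain t where t: "(\<lambda>i. 1 * w i + complex_of_real t * u i) \<in> Pos m" using pos_shift[OF w u] by blast
    have "T1 (\<lambda>i. 1 * w i + complex_of_real t * u i) = (\<lambda>i. 1 * T1 w i + complex_of_real t * T1 u i)"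
      by (rule Bu_lin[OF T1 w uV])
    moreover have "T2 (\<lambda>i. 1 * w i + complex_of_real t * u i) = (\<lambda>i. 1 * T2 w i + complex_of_real t * T2 u i)"
      by (rule Bu_lin[OF T2 w uV])
    ultimately have "(\<lambda>i. 1 * T1 w i + complex_of_real t * T1 u i) = (\<lambda>i. l * (1 * T2 w i + complex_of_real t * T2 u i))"
      using onpos[OF t] by simp
    hence "\<forall>i. T1 w i + complex_of_real t * (l * T2 u i) = l * T2 w i + l * (complex_of_real t * T2 u i)"
      using l(2) by (simp add: fun_eq_iff algebra_simps)
    hence "\<forall>i. T1 w i = l * T2 w i" by (simp add: algebra_simps)
    thus ?thesis by auto
  qed
  thus ?thesis using cl by blast
qed

lemma Cart_cline:
  assumes "v1 \<in> Vsp m" "v2 \<in> Vsp m" "v3 \<in> Vsp m"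
  shows "Cart (cline v1) (cline v2) (cline v3) = Arg (Bform v1 v2 * Bform v2 v3 * Bform v3 v1)"
proof -
  obtain a1 where a1: "a1 \<noteq> 0" "lift (cline v1) = (\<lambda>i. a1 * v1 i)" using lift_cline by blast
  obtain a2 where a2: "a2 \<noteq> 0" "lift (cline v2) = (\<lambda>i. a2 * v2 i)" using lift_cline by blast
  obtain a3 where a3: "a3 \<noteq> 0" "lift (cline v3) = (\<lambda>i. a3 * v3 i)" using lift_cline by blast
  have "Bform (lift (cline v1)) (lift (cline v2)) * Bform (lift (cline v2)) (lift (cline v3))
        * Bform (lift (cline v3)) (lift (cline v1))
      = (a1 * cnj a2 * Bform v1 v2) * (a2 * cnj a3 * Bform v2 v3) * (a3 * cnj a1 * Bform v3 v1)"
    unfolding a1(2) a2(2) a3(2) using Bform_scale assms by simp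
  also have "\<dots> = ((a1 * cnj a1) * (a2 * cnj a2) * (a3 * cnj a3)) * (Bform v1 v2 * Bform v2 v3 * Bform v3 v1)"
    by (simp add: algebra_simps)
  also have "\<dots> = complex_of_real ((cmod a1)\<^sup>2 * (cmod a2)\<^sup>2 * (cmod a3)\<^sup>2) * (Bform v1 v2 * Bform v2 v3 * Bform v3 v1)"
    by (simp only: of_real_mult complex_norm_square)
  finally have e: "Bform (lift (cline v1)) (lift (cline v2)) * Bform (lift (cline v2)) (lift (cline v3))
        * Bform (lift (cline v3)) (lift (cline v1)) = complex_of_real ((cmod a1)\<^sup>2 * (cmod a2)\<^sup>2 * (cmod a3)\<^sup>2) * (Bform v1 v2 * Bform v2 v3 * Bform v3 v1)" .
  have "(cmod a1)\<^sup>2 * (cmod a2)\<^sup>2 * (cmod a3)\<^sup>2 > 0" using a1 a2 a3 by simp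
  thus ?thesis unfolding Cart_def e by (rule Arg_times_of_real)
qed

lemma sgn_polar: "(z::complex) = complex_of_real (cmod z) * sgn z"
proof (cases "z = 0")
  case False
  thus ?thesis by (simp add: complex_sgn_def scaleR_conv_of_real)
qed simp

lemma sgn_cnj': "sgn (cnj z) = cnj (sgn z)"
  by (simp add: complex_sgn_def scaleR_conv_of_real)

lemma sgn_unit: "cmod (z::complex) = 1 \<Longrightarrow> sgn z = z"
  by (simp add: complex_sgn_def)

lemma sgn_eqI: fixes a b :: complex assumes "sgn a = sgn b" "cmod a = cmod b" shows "a = b"
  using sgn_polar[of a] sgn_polar[of b] assms by simp

lemma cmod_sgn1: "(z::complex) \<noteq> 0 \<Longrightarrow> cmod (sgn z) = 1"
  by (simp add: norm_sgn)

theorem mainTheorem5: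
  fixes G :: "('g, 'b) monoid_scheme" and T :: "'g topology" and m :: enat
    and \<rho> :: "'g \<Rightarrow> cvec set \<Rightarrow> cvec set" and x :: "cvec set"
    and \<omega> :: "'g \<Rightarrow> 'g \<Rightarrow> real"
  assumes "topological_group G T"
    and "representation G T m \<rho>"
    and "x \<in> HypSp m"
    and "total m ((\<lambda>g. \<rho> g x) ` carrier G)"
    and "\<forall>g\<in>carrier G. \<forall>l\<in>carrier G. \<omega> l g = - \<omega> g l"
    and "\<forall>h\<in>carrier G. \<forall>g\<in>carrier G. \<forall>l\<in>carrier G.
           \<omega> (h \<otimes>\<^bsub>G\<^esub> g) (h \<otimes>\<^bsub>G\<^esub> l) = \<omega> g l"
    and "\<forall>g\<in>carrier G. \<forall>l\<in>carrier G. \<forall>k\<in>carrier G.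
           \<omega> l k - \<omega> g k + \<omega> g l = Cart (\<rho> g x) (\<rho> l x) (\<rho> k x)"
  shows "\<exists>\<rho>'. (\<forall>g\<in>carrier G. Bunitary m (\<rho>' g))
     \<and> (\<forall>g\<in>carrier G. \<forall>h\<in>carrier G. \<forall>v\<in>Vsp m. \<rho>' (g \<otimes>\<^bsub>G\<^esub> h) v = \<rho>' g (\<rho>' h v))
     \<and> (\<forall>g\<in>carrier G. \<forall>p\<in>HypSp m. \<rho> g p = induced (\<rho>' g) p)"
proof -
  note alt = assms(5) and inv = assms(6) and cocyc = assms(7)
  have grp: "group G" using assms(1) unfolding topological_group_def by blast
  interpret group G by (rule grp)
  have PUg: "\<And>g. g \<in> carrier G \<Longrightarrow> PU m (\<rho> g)" using assms(2) unfolding representation_def by blast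
  have homr: "\<And>g h p. g \<in> carrier G \<Longrightarrow> h \<in> carrier G \<Longrightarrow> p \<in> HypSp m \<Longrightarrow> \<rho> (g \<otimes>\<^bsub>G\<^esub> h) p = \<rho> g (\<rho> h p)"
    using assms(2) unfolding representation_def by blast
  obtain u where u: "u \<in> Pos m" "x = cline u" using HypSp_E[OF assms(3)] by blast
  have uV: "u \<in> Vsp m" by (rule Pos_Vsp[OF u(1)])
  define e where "e = \<one>\<^bsub>G\<^esub>"
  have eG: "e \<in> carrier G" unfolding e_def by simp
  define TT where "TT g = (SOME S. Bunitary m S \<and> (\<forall>p\<in>HypSp m. \<rho> g p = induced S p))" for g
  have TT: "Bunitary m (TT g) \<and> (\<forall>p\<in>HypSp m. \<rho> g p = TT g ` p)" if g: "g \<in> carrier G" for g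
  proof -
    have "\<exists>S. Bunitary m S \<and> (\<forall>p\<in>HypSp m. \<rho> g p = induced S p)" using PUg[OF g] unfolding PU_def .
    hence "Bunitary m (TT g) \<and> (\<forall>p\<in>HypSp m. \<rho> g p = induced (TT g) p)"
      unfolding TT_def by (rule someI_ex)
    thus ?thesis unfolding induced_def .
  qed
  define f where "f g = Bform (TT g u) (TT e u)" for g
  have fnz: "f g \<noteq> 0" if g: "g \<in> carrier G" for g
    unfolding f_def by (rule Pos_pair_nonzero[OF Bu_Pos[OF conjunct1[OF TT[OF g]] u(1)] Bu_Pos[OF conjunct1[OF TT[OF eG]] u(1)]])
  define z where "z g = cis (\<omega> g e) * cnj (sgn (f g))" for g
  have zu: "cmod (z g) = 1" if g: "g \<in> carrier G" for g
    unfolding z_def using cmod_sgn1[OF fnz[OF g]] by (simp add: norm_mult)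
  have z0: "z g \<noteq> 0" if g: "g \<in> carrier G" for g using zu[OF g] by auto
  define R where "R g = (\<lambda>v i. z g * TT g v i)" for g
  have RB: "Bunitary m (R g)" if g: "g \<in> carrier G" for g
    unfolding R_def by (rule Bu_smul[OF conjunct1[OF TT[OF g]] zu[OF g]])
  have RV: "R g v \<in> Vsp m" if "g \<in> carrier G" "v \<in> Vsp m" for g v
    by (rule Bu_Vsp[OF RB[OF that(1)] that(2)])
  have RP: "R g v \<in> Pos m" if "g \<in> carrier G" "v \<in> Pos m" for g v
    by (rule Bu_Pos[OF RB[OF that(1)] that(2)])
  have Rind: "R g ` p = \<rho> g p" if g: "g \<in> carrier G" and p: "p \<in> HypSp m" for g p
  proof -
    obtain v where v: "v \<in> Pos m" "p = cline v" using HypSp_E[OF p] by blast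
    have vV: "v \<in> Vsp m" by (rule Pos_Vsp[OF v(1)])
    have "R g ` p = cline (R g v)" unfolding v(2) by (rule Bu_cline[OF RB[OF g] vV])
    also have "\<dots> = cline (TT g v)" unfolding R_def by (rule cline_scale[OF z0[OF g]])
    also have "\<dots> = TT g ` p" unfolding v(2) using Bu_cline[OF _ vV] TT[OF g] by simp
    also have "\<dots> = \<rho> g p" using TT[OF g] p by simp
    finally show ?thesis .
  qed
  have ee: "\<omega> e e = 0"
  proof -
    have "\<omega> e e = - \<omega> e e" using alt eG by blast
    thus ?thesis by linarith
  qed
  have ze: "z e = 1"
  proof -
    have "sgn (f e) = 1" unfolding f_def by (rule Bform_self_sgn[OF Bu_Pos[OF conjunct1[OF TT[OF eG]] u(1)]])
    thus ?thesis unfolding z_def ee by simp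
  qed
  define F where "F g l = Bform (R g u) (R l u)" for g l
  have Fnz: "F g l \<noteq> 0" if "g \<in> carrier G" "l \<in> carrier G" for g l
    unfolding F_def by (rule Pos_pair_nonzero[OF RP[OF that(1) u(1)] RP[OF that(2) u(1)]])
  have Fe: "sgn (F g e) = cis (\<omega> g e)" if g: "g \<in> carrier G" for g
  proof -
    have "F g e = z g * cnj (z e) * f g" unfolding F_def R_def f_def
      by (rule Bform_scale[OF Bu_Vsp[OF conjunct1[OF TT[OF g]] uV] Bu_Vsp[OF conjunct1[OF TT[OF eG]] uV]])
    also have "\<dots> = cis (\<omega> g e) * (cnj (sgn (f g)) * f g)" by (simp only: ze) (simp add: z_def)
    also have "cnj (sgn (f g)) * f g = complex_of_real (cmod (f g))"
    proof -
      have "cnj (sgn (f g)) * f g = complex_of_real (cmod (f g)) * (cnj (sgn (f g)) * sgn (f g))"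
      proof -
        have "cnj (sgn (f g)) * f g = cnj (sgn (f g)) * (complex_of_real (cmod (f g)) * sgn (f g))"
          by (subst sgn_polar[of "f g"]) (rule refl)
        thus ?thesis by (simp add: algebra_simps)
      qed
      also have "cnj (sgn (f g)) * sgn (f g) = 1"
        using unit_cnj[OF cmod_sgn1[OF fnz[OF g]]] by (simp add: mult.commute)
      finally show ?thesis by simp
    qed
    finally have "F g e = cis (\<omega> g e) * complex_of_real (cmod (f g))" .
    hence "sgn (F g e) = sgn (cis (\<omega> g e)) * sgn (complex_of_real (cmod (f g)))" by (simp add: sgn_mult)
    also have "sgn (complex_of_real (cmod (f g))) = 1" using fnz[OF g] by (simp add: sgn_of_real)
    also have "sgn (cis (\<omega> g e)) = cis (\<omega> g e)" by (rule sgn_unit) simp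
    finally show ?thesis by simp
  qed
  have rx: "\<rho> g x = cline (R g u)" if g: "g \<in> carrier G" for g
  proof -
    have "\<rho> g x = R g ` cline u" using Rind[OF g assms(3)] u(2) by simp
    also have "\<dots> = cline (R g u)" by (rule Bu_cline[OF RB[OF g] uV])
    finally show ?thesis .
  qed
  have sgn3: "sgn (F g l) * sgn (F l k) * sgn (F k g) = cis (\<omega> l k - \<omega> g k + \<omega> g l)"
    if "g \<in> carrier G" "l \<in> carrier G" "k \<in> carrier G" for g l k
  proof -
    have "\<omega> l k - \<omega> g k + \<omega> g l = Cart (cline (R g u)) (cline (R l u)) (cline (R k u))"
      using cocyc that rx by simp
    also have "\<dots> = Arg (F g l * F l k * F k g)" unfolding F_def
      by (rule Cart_cline[OF RV[OF that(1) uV] RV[OF that(2) uV] RV[OF that(3) uV]])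
    finally have "cis (\<omega> l k - \<omega> g k + \<omega> g l) = sgn (F g l * F l k * F k g)"
      using cis_Arg Fnz that by simp
    thus ?thesis by (simp add: sgn_mult)
  qed
  have star: "sgn (F g l) = cis (\<omega> g l)" if g: "g \<in> carrier G" and l: "l \<in> carrier G" for g l
  proof -
    have "F e g = cnj (F g e)" unfolding F_def by (rule Bform_cnj[OF RV[OF g uV] RV[OF eG uV]])
    hence s1: "sgn (F e g) = cis (- \<omega> g e)" using Fe[OF g] by (simp add: sgn_cnj' cis_cnj)
    have "sgn (F g l) * cis (\<omega> l e) * cis (- \<omega> g e) = cis (\<omega> l e - \<omega> g e + \<omega> g l)"
      using sgn3[OF g l eG] Fe[OF l] s1 by simp
    also have "\<dots> = (cis (\<omega> l e) * cis (- \<omega> g e)) * cis (\<omega> g l)" by (simp add: cis_mult)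
    finally have "sgn (F g l) * (cis (\<omega> l e) * cis (- \<omega> g e)) = cis (\<omega> g l) * (cis (\<omega> l e) * cis (- \<omega> g e))"
      by (simp add: algebra_simps)
    moreover have "cis (\<omega> l e) * cis (- \<omega> g e) \<noteq> 0" by simp
    ultimately show ?thesis by simp
  qed
  define Cf where "Cf g h = (SOME c. cmod c = 1 \<and> (\<forall>w\<in>Vsp m. R g (R h w) = (\<lambda>i. c * R (g \<otimes>\<^bsub>G\<^esub> h) w i)))" for g h
  have Cf: "cmod (Cf g h) = 1 \<and> (\<forall>w\<in>Vsp m. R g (R h w) = (\<lambda>i. Cf g h * R (g \<otimes>\<^bsub>G\<^esub> h) w i))"
    if g: "g \<in> carrier G" and h: "h \<in> carrier G" for g h
  proof -
    have gh: "g \<otimes>\<^bsub>G\<^esub> h \<in> carrier G" using g h by simp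
    have "\<forall>p\<in>HypSp m. (\<lambda>v. R g (R h v)) ` p = R (g \<otimes>\<^bsub>G\<^esub> h) ` p"
    proof
      fix p assume p: "p \<in> HypSp m"
      have "(\<lambda>v. R g (R h v)) ` p = R g ` (R h ` p)" by (simp add: image_image)
      also have "\<dots> = \<rho> g (\<rho> h p)" using Rind[OF h p] Rind[OF g Bu_HypSp[OF RB[OF h] p]] by simp
      also have "\<dots> = R (g \<otimes>\<^bsub>G\<^esub> h) ` p" using homr[OF g h p] Rind[OF gh p] by simp
      finally show "(\<lambda>v. R g (R h v)) ` p = R (g \<otimes>\<^bsub>G\<^esub> h) ` p" .
    qed
    hence "\<exists>c. cmod c = 1 \<and> (\<forall>w\<in>Vsp m. R g (R h w) = (\<lambda>i. c * R (g \<otimes>\<^bsub>G\<^esub> h) w i))"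
      by (rule scalar_lemma[OF Bu_comp[OF RB[OF g] RB[OF h]] RB[OF gh] u(1)])
    thus ?thesis unfolding Cf_def by (rule someI_ex)
  qed
  have Dstep: "Cf h g = Cf h l" if h: "h \<in> carrier G" and g: "g \<in> carrier G" and l: "l \<in> carrier G" for h g l
  proof -
    have hg: "h \<otimes>\<^bsub>G\<^esub> g \<in> carrier G" and hl: "h \<otimes>\<^bsub>G\<^esub> l \<in> carrier G" using h g l by simp_all
    have "F g l = Bform (R h (R g u)) (R h (R l u))" unfolding F_def
      using Bu_B[OF RB[OF h] RV[OF g uV] RV[OF l uV]] by simp
    also have "\<dots> = Bform (\<lambda>i. Cf h g * R (h \<otimes>\<^bsub>G\<^esub> g) u i) (\<lambda>i. Cf h l * R (h \<otimes>\<^bsub>G\<^esub> l) u i)"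
      using Cf[OF h g] Cf[OF h l] uV by simp
    also have "\<dots> = Cf h g * cnj (Cf h l) * F (h \<otimes>\<^bsub>G\<^esub> g) (h \<otimes>\<^bsub>G\<^esub> l)" unfolding F_def
      by (rule Bform_scale[OF RV[OF hg uV] RV[OF hl uV]])
    finally have e1: "F g l = Cf h g * cnj (Cf h l) * F (h \<otimes>\<^bsub>G\<^esub> g) (h \<otimes>\<^bsub>G\<^esub> l)" .
    have "sgn (F g l) = sgn (F (h \<otimes>\<^bsub>G\<^esub> g) (h \<otimes>\<^bsub>G\<^esub> l))" using star[OF g l] star[OF hg hl] inv h g l by simp
    moreover have "cmod (F g l) = cmod (F (h \<otimes>\<^bsub>G\<^esub> g) (h \<otimes>\<^bsub>G\<^esub> l))" unfolding e1
      using Cf[OF h g] Cf[OF h l] by (simp add: norm_mult)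
    ultimately have "F g l = F (h \<otimes>\<^bsub>G\<^esub> g) (h \<otimes>\<^bsub>G\<^esub> l)" by (rule sgn_eqI)
    hence "1 * F (h \<otimes>\<^bsub>G\<^esub> g) (h \<otimes>\<^bsub>G\<^esub> l) = (Cf h g * cnj (Cf h l)) * F (h \<otimes>\<^bsub>G\<^esub> g) (h \<otimes>\<^bsub>G\<^esub> l)" using e1 by simp
    hence "Cf h g * cnj (Cf h l) = 1" using Fnz[OF hg hl] by (metis mult_cancel_right)
    hence "Cf h g * cnj (Cf h l) * Cf h l = Cf h l" by simp
    moreover have "cnj (Cf h l) * Cf h l = 1" using unit_cnj[of "Cf h l"] Cf[OF h l] by (simp add: mult.commute)
    ultimately show ?thesis by (simp add: mult.assoc)
  qed
  have Estep: "Cf b d * Cf a (b \<otimes>\<^bsub>G\<^esub> d) = Cf a b * Cf (a \<otimes>\<^bsub>G\<^esub> b) d"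
    if a: "a \<in> carrier G" and b: "b \<in> carrier G" and d: "d \<in> carrier G" for a b d
  proof -
    have bd: "b \<otimes>\<^bsub>G\<^esub> d \<in> carrier G" and ab: "a \<otimes>\<^bsub>G\<^esub> b \<in> carrier G" using a b d by simp_all
    have abd: "a \<otimes>\<^bsub>G\<^esub> (b \<otimes>\<^bsub>G\<^esub> d) \<in> carrier G" using a bd by simp
    have "R a (R b (R d u)) = R a (\<lambda>i. Cf b d * R (b \<otimes>\<^bsub>G\<^esub> d) u i)" using Cf[OF b d] uV by simp
    also have "\<dots> = (\<lambda>i. Cf b d * R a (R (b \<otimes>\<^bsub>G\<^esub> d) u) i)" by (rule Bu_scale[OF RB[OF a] RV[OF bd uV]])
    also have "\<dots> = (\<lambda>i. (Cf b d * Cf a (b \<otimes>\<^bsub>G\<^esub> d)) * R (a \<otimes>\<^bsub>G\<^esub> (b \<otimes>\<^bsub>G\<^esub> d)) u i)"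
      using Cf[OF a bd] uV by (simp add: mult.assoc)
    finally have w1: "R a (R b (R d u)) = (\<lambda>i. (Cf b d * Cf a (b \<otimes>\<^bsub>G\<^esub> d)) * R (a \<otimes>\<^bsub>G\<^esub> (b \<otimes>\<^bsub>G\<^esub> d)) u i)" .
    have "R a (R b (R d u)) = (\<lambda>i. Cf a b * R (a \<otimes>\<^bsub>G\<^esub> b) (R d u) i)" using Cf[OF a b] RV[OF d uV] by simp
    also have "\<dots> = (\<lambda>i. (Cf a b * Cf (a \<otimes>\<^bsub>G\<^esub> b) d) * R ((a \<otimes>\<^bsub>G\<^esub> b) \<otimes>\<^bsub>G\<^esub> d) u i)"
      using Cf[OF ab d] uV by (simp add: mult.assoc)
    also have "(a \<otimes>\<^bsub>G\<^esub> b) \<otimes>\<^bsub>G\<^esub> d = a \<otimes>\<^bsub>G\<^esub> (b \<otimes>\<^bsub>G\<^esub> d)" using a b d by (simp add: m_assoc)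
    finally have w2: "R a (R b (R d u)) = (\<lambda>i. (Cf a b * Cf (a \<otimes>\<^bsub>G\<^esub> b) d) * R (a \<otimes>\<^bsub>G\<^esub> (b \<otimes>\<^bsub>G\<^esub> d)) u i)" .
    show ?thesis by (rule Pos_cancel[OF RP[OF abd u(1)]]) (use w1 w2 in simp)
  qed
  define c0 where "c0 = Cf e e"
  have Cconst: "Cf g h = c0" if g: "g \<in> carrier G" and h: "h \<in> carrier G" for g h
  proof -
    have ig: "inv\<^bsub>G\<^esub> g \<in> carrier G" using g by simp
    have "Cf g e * Cf (inv\<^bsub>G\<^esub> g) (g \<otimes>\<^bsub>G\<^esub> e) = Cf (inv\<^bsub>G\<^esub> g) g * Cf (inv\<^bsub>G\<^esub> g \<otimes>\<^bsub>G\<^esub> g) e" by (rule Estep[OF ig g eG])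
    moreover have "Cf (inv\<^bsub>G\<^esub> g) (g \<otimes>\<^bsub>G\<^esub> e) = Cf (inv\<^bsub>G\<^esub> g) g"
    proof -
      have "g \<otimes>\<^bsub>G\<^esub> e = g" using g unfolding e_def by simp
      thus ?thesis by simp
    qed
    moreover have "inv\<^bsub>G\<^esub> g \<otimes>\<^bsub>G\<^esub> g = e" using g unfolding e_def by simp
    ultimately have "Cf g e * Cf (inv\<^bsub>G\<^esub> g) g = Cf (inv\<^bsub>G\<^esub> g) g * Cf e e" by simp
    moreover have "Cf (inv\<^bsub>G\<^esub> g) g \<noteq> 0" using Cf[OF ig g] by auto
    ultimately have "Cf g e = Cf e e" by (simp add: mult.commute)
    thus ?thesis using Dstep[OF g h eG] unfolding c0_def by simp
  qed
  have c0u: "cmod c0 = 1" unfolding c0_def using Cf[OF eG eG] by simp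
  have c0c: "cnj c0 * c0 = 1" using unit_cnj[OF c0u] by (simp add: mult.commute)
  define \<rho>' where "\<rho>' g = (\<lambda>v i. cnj c0 * R g v i)" for g
  have B': "Bunitary m (\<rho>' g)" if g: "g \<in> carrier G" for g
    unfolding \<rho>'_def using Bu_smul[OF RB[OF g]] c0u by simp
  have H': "\<rho>' (g \<otimes>\<^bsub>G\<^esub> h) v = \<rho>' g (\<rho>' h v)" if g: "g \<in> carrier G" and h: "h \<in> carrier G" and v: "v \<in> Vsp m" for g h v
  proof -
    have "\<rho>' g (\<rho>' h v) = (\<lambda>i. cnj c0 * R g (\<lambda>i. cnj c0 * R h v i) i)" unfolding \<rho>'_def by simp
    also have "\<dots> = (\<lambda>i. cnj c0 * (cnj c0 * R g (R h v) i))"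
      using Bu_scale[OF RB[OF g] RV[OF h v]] by simp
    also have "\<dots> = (\<lambda>i. cnj c0 * ((cnj c0 * c0) * R (g \<otimes>\<^bsub>G\<^esub> h) v i))"
      using Cf[OF g h] Cconst[OF g h] v by (simp add: mult.assoc)
    also have "\<dots> = \<rho>' (g \<otimes>\<^bsub>G\<^esub> h) v" unfolding \<rho>'_def c0c by simp
    finally show ?thesis by simp
  qed
  have I': "\<rho> g p = induced (\<rho>' g) p" if g: "g \<in> carrier G" and p: "p \<in> HypSp m" for g p
  proof -
    obtain v where v: "v \<in> Pos m" "p = cline v" using HypSp_E[OF p] by blast
    have vV: "v \<in> Vsp m" by (rule Pos_Vsp[OF v(1)])
    have c0n: "cnj c0 \<noteq> 0" using c0u by auto
    have "induced (\<rho>' g) p = cline (\<rho>' g v)" unfolding induced_def v(2) by (rule Bu_cline[OF B'[OF g] vV])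
    also have "\<dots> = cline (R g v)" unfolding \<rho>'_def by (rule cline_scale[OF c0n])
    also have "\<dots> = R g ` p" unfolding v(2) by (rule Bu_cline[OF RB[OF g] vV, symmetric])
    also have "\<dots> = \<rho> g p" by (rule Rind[OF g p])
    finally show ?thesis by simp
  qed
  show ?thesis
    apply (rule exI[of _ \<rho>'])
    using B' H' I' by blast
qed

end
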